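(* $c(8)\ge 6$.
   Context: $\mathbb{F}_q$ is the finite field with $q$ elements. Hamming distance $d(u,v)=|\{i:u_i\ne v_i\}|$ on $\mathbb{F}_q^3$; $B(u)=\{v:d(u,v)\le1\}$; $E(u)=\bigcup_{\lambda\in\mathbb{F}_q}B(\lambda u)$. A set $\mathcal{H}\subseteq\mathbb{F}_q^3$ is a short covering if $\bigcup_{h\in\mathcal{H}}E(h)=\mathbb{F}_q^3$; $c(q)$ is the minimum cardinality of a short covering of $\mathbb{F}_q^3$. *)

theory Defs
  imports "HOL-Analysis.Analysis"
begin

definition hamming_dist :: "'a ^ 'n \<Rightarrow> 'a ^ 'n \<Rightarrow> nat" where
  "hamming_dist u v = card {i. u $ i \<noteq> v $ i}"

definition hball1 :: "'a ^ 'n \<Rightarrow> ('a ^ 'n) set" where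
  "hball1 u = {v. hamming_dist u v \<le> 1}"

definition ext_ball :: "('a::field) ^ 'n \<Rightarrow> ('a ^ 'n) set" where
  "ext_ball u = (\<Union>c::'a. hball1 (c *s u))"

definition short_covering :: "(('a::field) ^ 3) set \<Rightarrow> bool" where
  "short_covering H \<longleftrightarrow> (\<Union>h\<in>H. ext_ball h) = UNIV"

definition short_covering_number :: "('a::{field,finite}) itself \<Rightarrow> nat" where
  "short_covering_number _ = Min {card H | H :: ('a ^ 3) set. short_covering H}"

end

theory Submission
  imports Defs
begin

lemma ham3:
  fixes u v :: "'a ^ 3"
  assumes d: "i \<noteq> j" "i \<noteq> k" "j \<noteq> k" and ex: "\<And>l. l = i \<or> l = j \<or> l = k"
  shows "hamming_dist u v \<le> 1 \<longleftrightarrow>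
     (u$i = v$i \<and> u$j = v$j) \<or> (u$i = v$i \<and> u$k = v$k) \<or> (u$j = v$j \<and> u$k = v$k)"
proof -
  have e: "hamming_dist u v \<le> 1 \<longleftrightarrow> (\<forall>a\<in>{l. u$l \<noteq> v$l}. \<forall>b\<in>{l. u$l \<noteq> v$l}. a = b)"
    unfolding hamming_dist_def One_nat_def by (rule card_le_Suc0_iff_eq) simp
  show ?thesis unfolding e using ex d by (smt (verit) mem_Collect_eq)
qed

lemma ext_ball_iff:
  fixes v h :: "'a::field ^ 3"
  assumes d: "i \<noteq> j" "i \<noteq> k" "j \<noteq> k" and ex: "\<And>l. l = i \<or> l = j \<or> l = k"
  shows "v \<in> ext_ball h \<longleftrightarrow> (\<exists>c. (c*h$i = v$i \<and> c*h$j = v$j) \<or> (c*h$i = v$i \<and> c*h$k = v$k) \<or> (c*h$j = v$j \<and> c*h$k = v$k))" (is "_ \<longleftrightarrow> ?rhs")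
proof -
  have "v \<in> ext_ball h \<longleftrightarrow> (\<exists>c. hamming_dist (c *s h) v \<le> 1)"
    unfolding ext_ball_def hball1_def by auto
  also have "\<dots> \<longleftrightarrow> ?rhs" unfolding ham3[OF d ex] by simp
  finally show ?thesis .
qed


lemma card_nonzero:
  assumes "CARD('a::{field,finite}) = 8"
  shows "card {t::'a. t \<noteq> 0} = 7"
proof -
  have "{t::'a. t \<noteq> 0} = UNIV - {0}" by auto
  then show ?thesis using assms by (simp add: card_Diff_singleton)
qed

lemma low_exists:
  fixes H :: "('a::{field,finite}^3) set"
  assumes d: "i \<noteq> j" "i \<noteq> k" "j \<noteq> k" and ex: "\<And>l. l = i \<or> l = j \<or> l = k"
    and cov: "short_covering H" and cH: "card H \<le> 5" and q: "CARD('a) = 8"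
  shows "\<exists>h\<in>H. h \<noteq> 0 \<and> h$k = 0"
proof (rule ccontr)
  assume nz: "\<not> ?thesis"
  let ?w = "\<lambda>t. (\<chi> l. if l = i then 1 else if l = j then t else 0) :: 'a^3"
  have sub: "{t::'a. t \<noteq> 0} \<subseteq> (\<lambda>h. h$j / h$i) ` H"
  proof
    fix t :: 'a assume "t \<in> {t. t\<noteq>0}" hence t0: "t\<noteq>0" by simp
    from cov obtain h where hH: "h\<in>H" and "?w t \<in> ext_ball h" unfolding short_covering_def by blast
    then obtain c where c: "(c*h$i = 1 \<and> c*h$j = t) \<or> (c*h$i = 1 \<and> c*h$k = 0) \<or> (c*h$j = t \<and> c*h$k = 0)"
      unfolding ext_ball_iff[OF d ex] using d by auto
    have hk: "h$k \<noteq> 0 \<or> h = 0" using nz hH by auto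
    have "t = h$j / h$i"
    proof -
      { assume "c*h$i = 1 \<and> c*h$k = 0"
        hence False using hk by (metis mult_eq_0_iff zero_index zero_neq_one) }
      moreover
      { assume "c*h$j = t \<and> c*h$k = 0"
        hence False using hk t0 by (metis mult_eq_0_iff zero_index) }
      moreover
      { assume a: "c*h$i = 1 \<and> c*h$j = t"
        hence "h$i \<noteq> 0" by auto
        hence "t = h$j / h$i" using a by (metis divide_eq_eq mult.commute mult.left_commute mult_1_right) }
      ultimately show ?thesis using c by blast
    qed
    then show "t \<in> (\<lambda>h. h$j / h$i) ` H" using hH by blast
  qed
  have "7 \<le> card ((\<lambda>h. h$j / h$i) ` H)"
    using card_mono[OF _ sub] card_nonzero[OF q] by simp
  also have "\<dots> \<le> card H" by (rule card_image_le) simp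
  finally show False using cH by simp
qed

lemma nonzero3: "(h::'a::zero^3) \<noteq> 0 \<longleftrightarrow> h$1 \<noteq> 0 \<or> h$2 \<noteq> 0 \<or> h$3 \<noteq> 0"
  by (metis (mono_tags) exhaust_3 vec_eq_iff zero_index)

lemma count_ineq:
  fixes H :: "('a::{zero,finite}^3) set"
  shows "2 * (card {h\<in>H. h$1 \<noteq> 0 \<and> h$2 \<noteq> 0} + card {h\<in>H. h$1 \<noteq> 0 \<and> h$3 \<noteq> 0} + card {h\<in>H. h$2 \<noteq> 0 \<and> h$3 \<noteq> 0})
     + 3 * (card {h\<in>H. h \<noteq> 0 \<and> h$1 = 0} + card {h\<in>H. h \<noteq> 0 \<and> h$2 = 0} + card {h\<in>H. h \<noteq> 0 \<and> h$3 = 0}) \<le> 6 * card H"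
proof -
  have fin: "finite H" by simp
  have cs: "\<And>P. card {h\<in>H. P h} = (\<Sum>h\<in>H. if P h then 1 else 0)"
    using fin by (simp add: sum.inter_filter[symmetric])
  have pw: "\<And>h::'a^3. 2 * ((if h$1 \<noteq> 0 \<and> h$2 \<noteq> 0 then 1 else 0) + (if h$1 \<noteq> 0 \<and> h$3 \<noteq> 0 then 1 else 0) + (if h$2 \<noteq> 0 \<and> h$3 \<noteq> 0 then 1 else 0))
      + 3 * ((if h \<noteq> 0 \<and> h$1 = 0 then 1 else 0) + (if h \<noteq> 0 \<and> h$2 = 0 then 1 else 0) + (if h \<noteq> 0 \<and> h$3 = 0 then 1 else 0)) \<le> (6::nat)"
    unfolding nonzero3 by auto
  let ?f = "\<lambda>h::'a^3. 2 * ((if h$1 \<noteq> 0 \<and> h$2 \<noteq> 0 then 1 else 0) + (if h$1 \<noteq> 0 \<and> h$3 \<noteq> 0 then 1 else 0) + (if h$2 \<noteq> 0 \<and> h$3 \<noteq> 0 then 1 else 0))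
      + 3 * ((if h \<noteq> 0 \<and> h$1 = 0 then 1 else 0) + (if h \<noteq> 0 \<and> h$2 = 0 then 1 else 0) + (if h \<noteq> 0 \<and> h$3 = 0 then 1 else 0))"
  have "(\<Sum>h\<in>H. ?f h) \<le> (\<Sum>h\<in>H. (6::nat))" by (rule sum_mono) (rule pw)
  then show ?thesis unfolding cs
    by (simp add: sum.distrib sum_distrib_left mult.commute)
qed

lemma card_ge1: "x \<in> (S::('b::finite) set) \<Longrightarrow> 1 \<le> card S"
  by (metis One_nat_def Suc_leI card_gt_0_iff empty_iff finite)

lemma core:
  fixes H :: "('a::{field,finite}^3) set"
  assumes cH: "card H \<le> 5" and q: "CARD('a) = 8" and cov: "short_covering H"
  shows False
proof -
  have d12: "(1::3) \<noteq> 2" and d13: "(1::3) \<noteq> 3" and d23: "(2::3) \<noteq> 3" by simp_all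
  have ex: "\<And>l::3. l = 1 \<or> l = 2 \<or> l = 3" by (rule exhaust_3)
  have ex231: "\<And>l::3. l = 2 \<or> l = 3 \<or> l = 1" using exhaust_3 by (metis)
  have ex132: "\<And>l::3. l = 1 \<or> l = 3 \<or> l = 2" using exhaust_3 by (metis)
  obtain z1 where "z1 \<in> {h\<in>H. h \<noteq> 0 \<and> h$1 = 0}"
    using low_exists[OF d23 d12[symmetric] d13[symmetric] ex231 cov cH q] by blast
  hence Z1: "card {h\<in>H. h \<noteq> 0 \<and> h$1 = 0} \<ge> 1"
    by (rule card_ge1)
  obtain z2 where "z2 \<in> {h\<in>H. h \<noteq> 0 \<and> h$2 = 0}"
    using low_exists[OF d13 d12 d23[symmetric] ex132 cov cH q] by blast
  hence Z2: "card {h\<in>H. h \<noteq> 0 \<and> h$2 = 0} \<ge> 1"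
    by (rule card_ge1)
  obtain z3 where "z3 \<in> {h\<in>H. h \<noteq> 0 \<and> h$3 = 0}"
    using low_exists[OF d12 d13 d23 ex cov cH q] by blast
  hence Z3: "card {h\<in>H. h \<noteq> 0 \<and> h$3 = 0} \<ge> 1"
    by (rule card_ge1)
  define P12 where "P12 = {h\<in>H. h$1 \<noteq> 0 \<and> h$2 \<noteq> 0}"
  define P13 where "P13 = {h\<in>H. h$1 \<noteq> 0 \<and> h$3 \<noteq> 0}"
  define P23 where "P23 = {h\<in>H. h$2 \<noteq> 0 \<and> h$3 \<noteq> 0}"
  have sumP: "card P12 + card P13 + card P23 \<le> 10"
    using count_ineq[of H] Z1 Z2 Z3 cH unfolding P12_def P13_def P23_def by presburger
  define X where "X = (\<lambda>h. h$1 / h$3) ` P13"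
  define Y where "Y = (\<lambda>h. h$2 / h$3) ` P23"
  define D where "D = (\<lambda>h. h$1 / h$2) ` P12"
  have cX: "card X \<le> card P13" unfolding X_def by (rule card_image_le) simp
  have cY: "card Y \<le> card P23" unfolding Y_def by (rule card_image_le) simp
  have cD: "card D \<le> card P12" unfolding D_def by (rule card_image_le) simp
  have "card P13 \<le> card H" "card P23 \<le> card H" "card P12 \<le> card H"
    unfolding P12_def P13_def P23_def by (auto intro: card_mono)
  define G where "G = {t::'a. t \<noteq> 0}"
  have cG: "card G = 7" unfolding G_def using card_nonzero[OF q] .
  define A where "A = G - X"
  define B where "B = G - Y"
  define C where "C = G - D"
  have cA: "card A \<ge> 7 - card X" unfolding A_def using diff_card_le_card_Diff[of X G] cG by simp
  have cB: "card B \<ge> 7 - card Y" unfolding B_def using diff_card_le_card_Diff[of Y G] cG by simp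
  have cC: "card C \<ge> 7 - card D" unfolding C_def using diff_card_le_card_Diff[of D G] cG by simp
  have big: "card A + card B + card C \<ge> 11" and ne0: "card A \<noteq> 0" "card B \<noteq> 0" "card C \<noteq> 0"
    using cA cB cC cX cY cD sumP cH \<open>card P13 \<le> card H\<close> \<open>card P23 \<le> card H\<close> \<open>card P12 \<le> card H\<close>
    by linarith+
  have ne: "A \<noteq> {}" "B \<noteq> {}" "C \<noteq> {}" using ne0 by auto
  have AG: "A \<subseteq> G" "B \<subseteq> G" "C \<subseteq> G" unfolding A_def B_def C_def by auto
  have "\<exists>a\<in>A. \<exists>b\<in>B. a / b \<in> C"
  proof (rule ccontr)
    assume no: "\<not> ?thesis"
    have cGC: "card (G - C) = 7 - card C" using AG cG by (simp add: card_Diff_subset)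
    have cGA: "card (G - A) = 7 - card A" using AG cG by (simp add: card_Diff_subset)
    obtain b where b: "b \<in> B" using ne by blast
    obtain a where a: "a \<in> A" using ne by blast
    obtain c where c: "c \<in> C" using ne by blast
    have b0: "b \<noteq> 0" "a \<noteq> 0" "c \<noteq> 0" using a b c AG G_def by auto
    have "card ((\<lambda>x. x / b) ` A) \<le> card (G - C)"
      apply (rule card_mono) apply simp using no b b0 AG G_def by auto
    moreover have "card ((\<lambda>x. x / b) ` A) = card A"
      apply (rule card_image) using b0 by (auto simp: inj_on_def)
    ultimately have i1: "card A + card C \<le> 7" using cGC AG cG card_mono[of G C] by simp
    have "card ((\<lambda>y. a / y) ` B) \<le> card (G - C)"
      apply (rule card_mono) apply simp using no a b0 AG G_def by auto
    moreover have "card ((\<lambda>y. a / y) ` B) = card B"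
      apply (rule card_image) using b0 AG G_def by (auto simp: inj_on_def field_simps)
    ultimately have i2: "card B + card C \<le> 7" using cGC AG cG card_mono[of G C] by simp
    have "card ((\<lambda>y. c * y) ` B) \<le> card (G - A)"
    proof (rule card_mono)
      show "(\<lambda>y. c * y) ` B \<subseteq> G - A"
      proof
        fix x assume "x \<in> (\<lambda>y. c * y) ` B"
        then obtain y where y: "y \<in> B" "x = c * y" by blast
        hence y0: "y \<noteq> 0" using AG G_def by auto
        have "c * y / y = c" using y0 by simp
        hence "c * y \<notin> A" using no y c by metis
        then show "x \<in> G - A" using y y0 b0 G_def by auto
      qed
    qed simp
    moreover have "card ((\<lambda>y. c * y) ` B) = card B"
      apply (rule card_image) using b0 by (auto simp: inj_on_def)
    ultimately have i3: "card A + card B \<le> 7" using cGA AG cG card_mono[of G A] by simp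
    show False using i1 i2 i3 big by linarith
  qed
  then obtain a b where a: "a \<in> A" and b: "b \<in> B" and ab: "a / b \<in> C" by blast
  define v :: "'a^3" where "v = (\<chi> l. if l = 1 then a else if l = 2 then b else 1)"
  have v: "v$1 = a" "v$2 = b" "v$3 = 1" unfolding v_def by simp_all
  have a0: "a \<noteq> 0" "a \<notin> X" "b \<noteq> 0" "b \<notin> Y" "a / b \<notin> D"
    using a b ab unfolding A_def B_def C_def G_def by auto
  from cov obtain h where hH: "h \<in> H" and "v \<in> ext_ball h" unfolding short_covering_def by blast
  then obtain c where c: "(c*h$1 = a \<and> c*h$2 = b) \<or> (c*h$1 = a \<and> c*h$3 = 1) \<or> (c*h$2 = b \<and> c*h$3 = 1)"
    unfolding ext_ball_iff[OF d12 d13 d23 ex] v by blast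
  { assume e: "c*h$1 = a \<and> c*h$2 = b"
    hence nz: "c \<noteq> 0" "h$1 \<noteq> 0" "h$2 \<noteq> 0" using a0 by auto
    hence "h \<in> P12" using hH P12_def by simp
    moreover have "a / b = h$1 / h$2" using e nz by auto
    ultimately have False using a0 D_def by auto }
  moreover
  { assume e: "c*h$1 = a \<and> c*h$3 = 1"
    hence nz: "c \<noteq> 0" "h$1 \<noteq> 0" "h$3 \<noteq> 0" using a0 by auto
    hence "h \<in> P13" using hH P13_def by simp
    moreover have "a = h$1 / h$3" using e nz by (metis nonzero_mult_div_cancel_left mult_1_right times_divide_eq_right)
    ultimately have False using a0 X_def by auto }
  moreover
  { assume e: "c*h$2 = b \<and> c*h$3 = 1"
    hence nz: "c \<noteq> 0" "h$2 \<noteq> 0" "h$3 \<noteq> 0" using a0 by auto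
    hence "h \<in> P23" using hH P23_def by simp
    moreover have "b = h$2 / h$3" using e nz by (metis nonzero_mult_div_cancel_left mult_1_right times_divide_eq_right)
    ultimately have False using a0 Y_def by auto }
  ultimately show False using c by blast
qed

lemma univ_cov: "short_covering (UNIV :: ('a::field ^ 3) set)"
proof -
  have "\<And>h::'a^3. h \<in> ext_ball h"
    unfolding ext_ball_def hball1_def hamming_dist_def
    by (rule UN_I[of 1]) auto
  then show ?thesis unfolding short_covering_def by blast
qed

theorem proposition21:
  assumes "CARD('a::{field,finite}) = 8"
  shows "short_covering_number TYPE('a) \<ge> 6"
proof -
  let ?S = "{card H | H :: ('a ^ 3) set. short_covering H}"
  have fin: "finite ?S"
  proof (rule finite_subset)
    have cm: "\<And>H::('a^3) set. card H \<le> card (UNIV::('a^3) set)"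
      by (metis card_mono finite subset_UNIV)
    show "?S \<subseteq> {..CARD('a^3)}" using cm by blast
  qed simp
  have ne: "?S \<noteq> {}" using univ_cov by blast
  have "\<forall>n\<in>?S. 6 \<le> n"
  proof
    fix n assume "n \<in> ?S"
    then obtain H :: "('a^3) set" where "n = card H" "short_covering H" by blast
    then show "6 \<le> n" using core[of H] assms by fastforce
  qed
  then show ?thesis unfolding short_covering_number_def using fin ne by simp
qed

end
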